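(* Let $\mathcal{K}$ be a Hilbert space of dimension $D$ with a fixed orthonormal basis $\{|j\rangle\}_{j=1}^D$, let $\epsilon>0$, and let $U_1,\ldots,U_K$ be unitaries on $\mathcal{K}$ with $K \leq (10/\epsilon)^2 D\log(20D/\epsilon)$ such that $\frac{1-\epsilon}{D}\mathbb{1}\leq\frac{1}{K}\sum_{k}U_k\varphi U_k^*\leq\frac{1+\epsilon}{D}\mathbb{1}$ for every state $\varphi$ on $\mathcal{K}$. Consider the following protocol: Sender and Receiver share $|\Phi_D\rangle=\frac{1}{\sqrt D}\sum_{j=1}^D|j\rangle|j\rangle$; the Sender, given a description of a pure state $\psi=|\psi\rangle\langle\psi|$ on $\mathcal{K}$, measures on her half of $\Phi_D$ the POVM $$A_k=\frac{D}{K(1+\epsilon)}U_k\overline{\psi}U_k^*\ (k=1,\ldots,K),\qquad A_{\rm failure}=\mathbb{1}-\sum_{k=1}^K A_k,$$ and announces the outcome ("failure" or $k$); if the outcome is $k$, the Receiver applies $U_k^\top$ to his half of $\Phi_D$. Then for every pure state $|\psi\rangle\in\mathcal{K}$ this protocol realises remote state preparation exactly with probability of failure exactly $\frac{\epsilon}{1+\epsilon}\leq\epsilon$ (i.e. whenever the outcome is not "failure", the Receiver's state is exactly $\psi$). In particular, probabilistic exact remote state preparation of arbitrary pure states on $\mathcal{K}$ with error $\epsilon$ is possible using $$\log D+2\log\frac{10}{\epsilon}+\log\log\frac{20D}{\epsilon}\ \text{cbits}\quad\text{and}\quad \log D\ \text{ebits}.$$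
   Context: $\overline{\cdot}$ denotes complex conjugation and ${}^\top$ the transpose, both with respect to the basis $\{|j\rangle\}$; $\log$ is to base 2. A remote state preparation (r.s.p.) protocol: a Sender is given a classical description of a state from a set $\mathcal{X}$ of states on $\mathcal{K}$, and together with a Receiver uses resources (here: a shared maximally entangled state and forward classical communication) to produce a state $\widetilde\rho$ held by the Receiver. It is probabilistic exact with error $\epsilon$ if it additionally produces a flag, known to both parties, indicating "success" or "failure", such that for every input state $\rho\in\mathcal X$ the failure probability is at most $\epsilon$ and $\widetilde\rho=\rho$ whenever the flag is "success". Using $\log D$ ebits means using a maximally entangled state of Schmidt rank $D$; using $c$ cbits means the forward classical message takes at most $2^c$ values. *)

theory Defs
  imports "Jordan_Normal_Form.Matrix" "Jordan_Normal_Form.Conjugate" Complex_Main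
begin

text \<open>Finite-dimensional quantum mechanics on C^n with its standard basis,
  using Jordan_Normal_Form matrices.  Bipartite index (a,b) of C^n (x) C^m
  is encoded as a*m+b (first tensor factor = Sender).\<close>

definition mtrace :: "complex mat \<Rightarrow> complex" where
  "mtrace A = (\<Sum>i<dim_row A. A $$ (i,i))"

definition adj :: "complex mat \<Rightarrow> complex mat" where
  "adj A = mat (dim_col A) (dim_row A) (\<lambda>(i,j). cnj (A $$ (j,i)))"

definition conj_mat :: "complex mat \<Rightarrow> complex mat" where
  "conj_mat A = map_mat cnj A"

definition conj_vec :: "complex vec \<Rightarrow> complex vec" where
  "conj_vec v = map_vec cnj v"

definition unitary :: "nat \<Rightarrow> complex mat \<Rightarrow> bool" where
  "unitary n U \<longleftrightarrow> U \<in> carrier_mat n n \<and> U * adj U = 1\<^sub>m n \<and> adj U * U = 1\<^sub>m n"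

text \<open>positive semidefinite (complex order: 0 \<le> z iff z real and nonnegative)\<close>
definition psd :: "nat \<Rightarrow> complex mat \<Rightarrow> bool" where
  "psd n A \<longleftrightarrow> A \<in> carrier_mat n n \<and>
     (\<forall>v \<in> carrier_vec n. 0 \<le> scalar_prod (conj_vec v) (A *\<^sub>v v))"

definition loewner_le :: "nat \<Rightarrow> complex mat \<Rightarrow> complex mat \<Rightarrow> bool" where
  "loewner_le n A B \<longleftrightarrow> A \<in> carrier_mat n n \<and> B \<in> carrier_mat n n \<and> psd n (B - A)"

definition is_state :: "nat \<Rightarrow> complex mat \<Rightarrow> bool" where
  "is_state n \<rho> \<longleftrightarrow> psd n \<rho> \<and> mtrace \<rho> = 1"

definition ketbra :: "nat \<Rightarrow> complex vec \<Rightarrow> complex mat" where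
  "ketbra n v = mat n n (\<lambda>(i,j). v $ i * cnj (v $ j))"

definition tensor_mat :: "nat \<Rightarrow> nat \<Rightarrow> complex mat \<Rightarrow> complex mat \<Rightarrow> complex mat" where
  "tensor_mat n m A B = mat (n*m) (n*m)
     (\<lambda>(i,j). A $$ (i div m, j div m) * B $$ (i mod m, j mod m))"

definition ptrace1 :: "nat \<Rightarrow> nat \<Rightarrow> complex mat \<Rightarrow> complex mat" where
  "ptrace1 n m R = mat m m (\<lambda>(i,j). \<Sum>a<n. R $$ (a*m+i, a*m+j))"

definition max_ent :: "nat \<Rightarrow> complex vec" where
  "max_ent D = vec (D*D) (\<lambda>i. if i div D = i mod D then complex_of_real (1 / sqrt (real D)) else 0)"

definition twirl :: "nat \<Rightarrow> nat \<Rightarrow> (nat \<Rightarrow> complex mat) \<Rightarrow> complex mat \<Rightarrow> complex mat" where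
  "twirl D K U \<phi> = mat D D (\<lambda>ij. complex_of_real (1 / real K) *
      (\<Sum>k\<in>{1..K}. (U k * \<phi> * adj (U k)) $$ ij))"

definition povm_k :: "nat \<Rightarrow> nat \<Rightarrow> real \<Rightarrow> (nat \<Rightarrow> complex mat) \<Rightarrow> complex vec \<Rightarrow> nat \<Rightarrow> complex mat" where
  "povm_k D K \<epsilon> U \<psi> k = complex_of_real (real D / (real K * (1 + \<epsilon>)))
      \<cdot>\<^sub>m (U k * ketbra D (conj_vec \<psi>) * adj (U k))"

definition povm_fail :: "nat \<Rightarrow> nat \<Rightarrow> real \<Rightarrow> (nat \<Rightarrow> complex mat) \<Rightarrow> complex vec \<Rightarrow> complex mat" where
  "povm_fail D K \<epsilon> U \<psi> = mat D D (\<lambda>ij. (1\<^sub>m D) $$ ij - (\<Sum>k\<in>{1..K}. povm_k D K \<epsilon> U \<psi> k $$ ij))"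

text \<open>Unnormalised reduced state of the Receiver after the Sender obtains outcome
  with POVM element A on her half of Phi_D: Tr_S[(A (x) 1)|Phi_D><Phi_D|].
  Its trace is the probability of the outcome.\<close>
definition receiver_post :: "nat \<Rightarrow> complex mat \<Rightarrow> complex mat" where
  "receiver_post D A = ptrace1 D D (tensor_mat D D A (1\<^sub>m D) * ketbra (D*D) (max_ent D))"

end

theory Submission
  imports Defs
begin

lemma adj_carrier[simp]: "A \<in> carrier_mat n m \<Longrightarrow> adj A \<in> carrier_mat m n"
  unfolding adj_def by auto
lemma adj_dims[simp]: "dim_row (adj A) = dim_col A" "dim_col (adj A) = dim_row A"
  unfolding adj_def by auto
lemma adj_index[simp]: "i < dim_col A \<Longrightarrow> j < dim_row A \<Longrightarrow> adj A $$ (i,j) = cnj (A $$ (j,i))"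
  unfolding adj_def by auto

lemma mtrace_comm:
  assumes "A \<in> carrier_mat n n" "B \<in> carrier_mat n n"
  shows "mtrace (A*B) = mtrace (B*A)"
proof -
  have "mtrace (A*B) = (\<Sum>i<n. \<Sum>j<n. A$$(i,j) * B$$(j,i))"
    using assms unfolding mtrace_def by (simp add: scalar_prod_def atLeast0LessThan)
  also have "\<dots> = (\<Sum>j<n. \<Sum>i<n. B$$(j,i) * A$$(i,j))"
    by (subst sum.swap) (simp add: mult.commute)
  also have "\<dots> = mtrace (B*A)"
    using assms unfolding mtrace_def by (simp add: scalar_prod_def atLeast0LessThan)
  finally show ?thesis .
qed

lemma mtrace_smult: "A \<in> carrier_mat n n \<Longrightarrow> mtrace (c \<cdot>\<^sub>m A) = c * mtrace A"
  unfolding mtrace_def by (auto simp add: sum_distrib_left)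

lemma mtrace_transpose: "A \<in> carrier_mat n n \<Longrightarrow> mtrace (transpose_mat A) = mtrace A"
  unfolding mtrace_def by auto

lemma ketbra_carrier[simp]: "ketbra n x \<in> carrier_mat n n"
  unfolding ketbra_def by auto

lemma ketbra_psd:
  assumes x: "x \<in> carrier_vec n"
  shows "psd n (ketbra n x)"
  unfolding psd_def
proof (intro conjI ballI)
  fix v :: "complex vec" assume v: "v \<in> carrier_vec n"
  define z where "z = (\<Sum>j<n. cnj (x$j) * v$j)"
  have "scalar_prod (conj_vec v) (ketbra n x *\<^sub>v v) = (\<Sum>i<n. cnj (v$i) * (\<Sum>j<n. x$i * cnj (x$j) * v$j))"
    using x v unfolding conj_vec_def ketbra_def
    by (simp add: scalar_prod_def mult_mat_vec_def atLeast0LessThan)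
  also have "\<dots> = (\<Sum>i<n. cnj (v$i) * x$i) * z"
    unfolding z_def by (simp add: sum_distrib_left sum_distrib_right ac_simps)
  also have "(\<Sum>i<n. cnj (v$i) * x$i) = cnj z"
    unfolding z_def by (simp add: mult.commute)
  also have "cnj z * z = complex_of_real ((Re z)^2 + (Im z)^2)"
    by (simp add: complex_mult_cnj mult.commute)
  finally show "0 \<le> scalar_prod (conj_vec v) (ketbra n x *\<^sub>v v)"
    by (simp add: less_eq_complex_def)
qed simp

lemma unitary_ketbra:
  assumes U: "U \<in> carrier_mat n n" and x: "x \<in> carrier_vec n"
  shows "U * ketbra n x * adj U = ketbra n (U *\<^sub>v x)"
proof (rule eq_matI)
  fix i j assume i: "i < dim_row (ketbra n (U *\<^sub>v x))" and j: "j < dim_col (ketbra n (U *\<^sub>v x))"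
  then have i: "i < n" and j: "j < n" unfolding ketbra_def by auto
  have "(U * ketbra n x * adj U) $$ (i,j) = (\<Sum>l<n. (\<Sum>m<n. U$$(i,m) * (x$m * cnj (x$l))) * cnj (U$$(j,l)))"
    using U x i j unfolding ketbra_def
    by (simp add: scalar_prod_def atLeast0LessThan)
  also have "\<dots> = (\<Sum>m<n. U$$(i,m) * x$m) * cnj (\<Sum>l<n. U$$(j,l) * x$l)"
    by (simp add: sum_distrib_left sum_distrib_right ac_simps)
  also have "\<dots> = ketbra n (U *\<^sub>v x) $$ (i,j)"
    using U x i j unfolding ketbra_def
    by (simp add: scalar_prod_def mult_mat_vec_def atLeast0LessThan)
  finally show "(U * ketbra n x * adj U) $$ (i,j) = ketbra n (U *\<^sub>v x) $$ (i,j)" .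
qed (use U in \<open>auto simp: ketbra_def\<close>)

lemma smult_mat_mult_vec: "A \<in> carrier_mat n m \<Longrightarrow> v \<in> carrier_vec m \<Longrightarrow> (k \<cdot>\<^sub>m A) *\<^sub>v v = k \<cdot>\<^sub>v (A *\<^sub>v v)"
  by (intro eq_vecI) (auto simp: scalar_prod_def sum_distrib_left ac_simps)

lemma psd_smult:
  assumes "psd n A" "0 \<le> r"
  shows "psd n (complex_of_real r \<cdot>\<^sub>m A)"
  unfolding psd_def
proof (intro conjI ballI)
  show "complex_of_real r \<cdot>\<^sub>m A \<in> carrier_mat n n" using assms unfolding psd_def by auto
  fix v :: "complex vec" assume v: "v \<in> carrier_vec n"
  have A: "A \<in> carrier_mat n n" and h: "0 \<le> scalar_prod (conj_vec v) (A *\<^sub>v v)"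
    using assms v unfolding psd_def by auto
  have "scalar_prod (conj_vec v) ((complex_of_real r \<cdot>\<^sub>m A) *\<^sub>v v) = complex_of_real r * scalar_prod (conj_vec v) (A *\<^sub>v v)"
    using A v unfolding conj_vec_def by (simp add: smult_mat_mult_vec)
  also have "0 \<le> \<dots>" using h assms(2) by (intro mult_nonneg_nonneg) (auto simp: less_eq_complex_def)
  finally show "0 \<le> scalar_prod (conj_vec v) ((complex_of_real r \<cdot>\<^sub>m A) *\<^sub>v v)" .
qed

lemma lt_sq: "a < (D::nat) \<Longrightarrow> b < D \<Longrightarrow> a*D+b < D*D"
proof -
  assume "a < D" "b < D"
  then have "a*D+b < a*D + D" by simp
  also have "\<dots> = (a+1)*D" by simp
  also have "\<dots> \<le> D*D" using \<open>a<D\<close> by (intro mult_le_mono1) simp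
  finally show ?thesis .
qed

lemma receiver_post_eq:
  assumes A: "A \<in> carrier_mat D D" and D: "D \<ge> 1"
  shows "receiver_post D A = complex_of_real (1 / real D) \<cdot>\<^sub>m transpose_mat A"
proof -
  define s where "s = complex_of_real (1 / sqrt (real D))"
  define e where "e = (\<lambda>l. if l div D = l mod D then s else (0::complex))"
  have me: "max_ent D = vec (D*D) e" unfolding max_ent_def e_def s_def by simp
  define M where "M = tensor_mat D D A (1\<^sub>m D) * ketbra (D*D) (max_ent D)"

  have Mx: "M $$ (x,y) = A $$ (x div D, x mod D) * s * cnj (e y)" if x: "x < D*D" and y: "y < D*D" for x y
  proof -
    define t where "t = (x mod D) * D + x mod D"
    have Dp: "D > 0" using D by simp
    have xm: "x mod D < D" using Dp by simp
    have t: "t < D*D" unfolding t_def using lt_sq[OF xm xm] by simp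
    have tdiv: "t div D = x mod D" "t mod D = x mod D" unfolding t_def using xm Dp by simp_all
    define f where "f = (\<lambda>l. A $$ (x div D, l div D) * (1\<^sub>m D $$ (x mod D, l mod D)) * (e l * cnj (e y)))"
    have "M $$ (x,y) = (\<Sum>l<D*D. f l)"
      unfolding M_def f_def tensor_mat_def ketbra_def me using x y
      by (simp add: scalar_prod_def atLeast0LessThan)
    also have "\<dots> = f t + (\<Sum>l\<in>{..<D*D}-{t}. f l)"
      using t by (intro sum.remove) auto
    also have "(\<Sum>l\<in>{..<D*D}-{t}. f l) = 0"
    proof (rule sum.neutral, rule ballI)
      fix l assume l: "l \<in> {..<D*D}-{t}"
      have lm: "l mod D < D" using Dp by simp
      have "l = (l div D) * D + l mod D" by simp
      show "f l = 0"
      proof (cases "x mod D = l mod D \<and> l div D = l mod D")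
        case True
        then have "l = t" unfolding t_def using div_mult_mod_eq[of l D] by metis
        then show ?thesis using l by simp
      next
        case False
        then show ?thesis unfolding f_def e_def using xm lm by auto
      qed
    qed
    also have "f t = A $$ (x div D, x mod D) * s * cnj (e y)"
      unfolding f_def e_def using tdiv xm by simp
    finally show ?thesis by simp
  qed
  have ss: "s * cnj s = complex_of_real (1 / real D)"
  proof -
    have r: "(1/sqrt (real D)) * (1/sqrt (real D)) = 1 / real D" using D by simp
    show ?thesis unfolding s_def by (simp only: complex_cnj_complex_of_real of_real_mult[symmetric] r)
  qed
  show ?thesis
  proof (rule eq_matI)
    fix i j assume "i < dim_row (complex_of_real (1 / real D) \<cdot>\<^sub>m transpose_mat A)"
      "j < dim_col (complex_of_real (1 / real D) \<cdot>\<^sub>m transpose_mat A)"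
    then have i: "i < D" and j: "j < D" using A by auto
    have "receiver_post D A $$ (i,j) = (\<Sum>a<D. M $$ (a*D+i, a*D+j))"
      unfolding receiver_post_def ptrace1_def M_def[symmetric] using i j by simp
    also have "\<dots> = (\<Sum>a<D. if a = j then A $$ (j, i) * (s * cnj s) else 0)"
    proof (rule sum.cong[OF refl])
      fix a assume a: "a \<in> {..<D}"
      have "M $$ (a*D+i, a*D+j) = A $$ (a, i) * s * cnj (e (a*D+j))"
        using Mx[OF lt_sq lt_sq] a i j by simp
      then show "M $$ (a*D+i, a*D+j) = (if a = j then A $$ (j, i) * (s * cnj s) else 0)"
        unfolding e_def using i j by auto
    qed
    also have "\<dots> = A $$ (j, i) * (s * cnj s)" using j by simp
    also have "\<dots> = (complex_of_real (1 / real D) \<cdot>\<^sub>m transpose_mat A) $$ (i,j)"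
      using ss i j A by simp
    finally show "receiver_post D A $$ (i,j) = (complex_of_real (1 / real D) \<cdot>\<^sub>m transpose_mat A) $$ (i,j)" .
  qed (use A in \<open>simp_all add: receiver_post_def ptrace1_def\<close>)
qed

lemma transpose_smult: "transpose_mat (c \<cdot>\<^sub>m A) = c \<cdot>\<^sub>m transpose_mat A"
  by (intro eq_matI) auto
lemma transpose_adj: "transpose_mat (adj A) = conj_mat A"
  by (intro eq_matI) (auto simp: adj_def conj_mat_def)
lemma conj_mat_carrier[simp]: "A \<in> carrier_mat n m \<Longrightarrow> conj_mat A \<in> carrier_mat n m"
  by (auto simp: conj_mat_def)
lemma transpose_ketbra_conj: "x \<in> carrier_vec n \<Longrightarrow> transpose_mat (ketbra n (conj_vec x)) = ketbra n x"
  by (intro eq_matI) (auto simp: ketbra_def conj_vec_def)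
lemma smult_smult_m: "a \<cdot>\<^sub>m (b \<cdot>\<^sub>m A) = (a*b) \<cdot>\<^sub>m (A :: complex mat)"
  by (intro eq_matI) auto

lemma unitary_TC:
  assumes "unitary n U" shows "transpose_mat U * conj_mat U = 1\<^sub>m n"
proof -
  have U: "U \<in> carrier_mat n n" and h: "adj U * U = 1\<^sub>m n" using assms unfolding unitary_def by auto
  have "transpose_mat (adj U * U) = transpose_mat U * transpose_mat (adj U)"
    using U by (intro transpose_mult) auto
  then show ?thesis using h by (simp add: transpose_adj)
qed

lemma conj_step:
  assumes u: "unitary n U" and Kc: "K \<in> carrier_mat n n"
  shows "transpose_mat U * (conj_mat U * K * transpose_mat U) * conj_mat U = K"
proof -
  have U: "U \<in> carrier_mat n n" using u unfolding unitary_def by auto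
  have T: "transpose_mat U \<in> carrier_mat n n" and C: "conj_mat U \<in> carrier_mat n n" using U by auto
  have CK: "conj_mat U * K \<in> carrier_mat n n" and KT: "K * transpose_mat U \<in> carrier_mat n n"
    and TC: "transpose_mat U * conj_mat U \<in> carrier_mat n n"
    using T C Kc by (metis mult_carrier_mat)+
  have CKT: "conj_mat U * (K * transpose_mat U) \<in> carrier_mat n n" using C KT by (metis mult_carrier_mat)
  have I: "transpose_mat U * conj_mat U = 1\<^sub>m n" by (rule unitary_TC[OF u])
  have "transpose_mat U * (conj_mat U * K * transpose_mat U) * conj_mat U
     = transpose_mat U * (conj_mat U * (K * transpose_mat U)) * conj_mat U"
    using assoc_mult_mat[OF C Kc T] by simp
  also have "\<dots> = transpose_mat U * ((conj_mat U * (K * transpose_mat U)) * conj_mat U)"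
    by (rule assoc_mult_mat[OF T CKT C])
  also have "(conj_mat U * (K * transpose_mat U)) * conj_mat U = conj_mat U * ((K * transpose_mat U) * conj_mat U)"
    by (rule assoc_mult_mat[OF C KT C])
  also have "(K * transpose_mat U) * conj_mat U = K * (transpose_mat U * conj_mat U)"
    by (rule assoc_mult_mat[OF Kc T C])
  also have "K * (transpose_mat U * conj_mat U) = K" using I Kc by simp
  also have "transpose_mat U * (conj_mat U * K) = (transpose_mat U * conj_mat U) * K"
    by (rule assoc_mult_mat[OF T C Kc, symmetric])
  also have "\<dots> = K" using I Kc by simp
  finally show ?thesis .
qed

lemma mtrace_unitary_conj:
  assumes u: "unitary n U" and Bc: "B \<in> carrier_mat n n"
  shows "mtrace (U * B * adj U) = mtrace B"
proof -
  have U: "U \<in> carrier_mat n n" and h: "adj U * U = 1\<^sub>m n" using u unfolding unitary_def by auto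
  have "mtrace (U * B * adj U) = mtrace (adj U * (U * B))"
    using U Bc by (intro mtrace_comm) auto
  also have "adj U * (U * B) = (adj U * U) * B" using U Bc by (simp add: assoc_mult_mat[of _ n n _ n _ n])
  also have "\<dots> = B" using h Bc by simp
  finally show ?thesis .
qed

theorem theorem5:
  fixes D K :: nat and \<epsilon> :: real and U :: "nat \<Rightarrow> complex mat"
  assumes D: "D \<ge> 1" and eps: "\<epsilon> > 0" and K: "K \<ge> 1"
    and Kbound: "real K \<le> (10 / \<epsilon>)^2 * real D * log 2 (20 * real D / \<epsilon>)"
    and unit: "\<forall>k\<in>{1..K}. unitary D (U k)"
    and twirl: "\<forall>\<phi>. is_state D \<phi> \<longrightarrow>
        loewner_le D (complex_of_real ((1 - \<epsilon>) / real D) \<cdot>\<^sub>m 1\<^sub>m D) (twirl D K U \<phi>) \<and>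
        loewner_le D (twirl D K U \<phi>) (complex_of_real ((1 + \<epsilon>) / real D) \<cdot>\<^sub>m 1\<^sub>m D)"
  shows "\<forall>\<psi> \<in> carrier_vec D. scalar_prod (conj_vec \<psi>) \<psi> = 1 \<longrightarrow>
      (\<forall>k\<in>{1..K}. psd D (povm_k D K \<epsilon> U \<psi> k)) \<and>
      psd D (povm_fail D K \<epsilon> U \<psi>) \<and>
      (\<forall>k\<in>{1..K}.
         transpose_mat (U k) * receiver_post D (povm_k D K \<epsilon> U \<psi> k) * conj_mat (U k)
         = mtrace (receiver_post D (povm_k D K \<epsilon> U \<psi> k)) \<cdot>\<^sub>m ketbra D \<psi>) \<and>
      mtrace (receiver_post D (povm_fail D K \<epsilon> U \<psi>)) = complex_of_real (\<epsilon> / (1 + \<epsilon>)) \<and>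
      \<epsilon> / (1 + \<epsilon>) \<le> \<epsilon> \<and>
      log 2 (real K) \<le> log 2 (real D) + 2 * log 2 (10 / \<epsilon>) + log 2 (log 2 (20 * real D / \<epsilon>))"
proof (intro ballI impI)
  fix \<psi> :: "complex vec"
  assume \<psi>: "\<psi> \<in> carrier_vec D" and nrm: "scalar_prod (conj_vec \<psi>) \<psi> = 1"
  define B where "B = ketbra D (conj_vec \<psi>)"
  define c where "c = real D / (real K * (1 + \<epsilon>))"
  define X where "X = (\<lambda>k. U k * B * adj (U k))"
  have cpsi: "conj_vec \<psi> \<in> carrier_vec D" using \<psi> unfolding conj_vec_def by auto
  have Uc: "U k \<in> carrier_mat D D" if "k \<in> {1..K}" for k using unit that unfolding unitary_def by auto
  have Bc: "B \<in> carrier_mat D D" unfolding B_def by simp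
  have Xc: "X k \<in> carrier_mat D D" if "k \<in> {1..K}" for k unfolding X_def using Uc[OF that] Bc by (metis mult_carrier_mat adj_carrier)
  have Ak: "povm_k D K \<epsilon> U \<psi> k = complex_of_real c \<cdot>\<^sub>m X k" for k
    unfolding povm_k_def X_def B_def c_def by simp
  have Akc: "povm_k D K \<epsilon> U \<psi> k \<in> carrier_mat D D" if "k \<in> {1..K}" for k
    using Xc[OF that] unfolding Ak by simp
  have c0: "c \<ge> 0" unfolding c_def using eps by simp
  have Kp: "real K > 0" using K by simp
  have Dp: "real D > 0" using D by simp
  have trB: "mtrace B = 1"
  proof -
    have "mtrace B = scalar_prod (conj_vec \<psi>) \<psi>"
      unfolding B_def mtrace_def ketbra_def conj_vec_def scalar_prod_def using \<psi>
      by (auto simp: atLeast0LessThan intro!: sum.cong)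
    then show ?thesis using nrm by simp
  qed
  have trX: "mtrace (X k) = 1" if "k \<in> {1..K}" for k
  proof -
    have "mtrace (X k) = mtrace B" unfolding X_def using unit that Bc by (intro mtrace_unitary_conj) auto
    then show ?thesis using trB by simp
  qed
  have trAk: "mtrace (povm_k D K \<epsilon> U \<psi> k) = complex_of_real c" if "k \<in> {1..K}" for k
    unfolding Ak using mtrace_smult[OF Xc[OF that]] trX[OF that] by simp
  have P1: "\<forall>k\<in>{1..K}. psd D (povm_k D K \<epsilon> U \<psi> k)"
  proof
    fix k assume k: "k \<in> {1..K}"
    have "X k = ketbra D (U k *\<^sub>v conj_vec \<psi>)"
      unfolding X_def B_def using Uc[OF k] cpsi by (rule unitary_ketbra)
    moreover have "U k *\<^sub>v conj_vec \<psi> \<in> carrier_vec D" using Uc[OF k] cpsi by simp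
    ultimately show "psd D (povm_k D K \<epsilon> U \<psi> k)"
      unfolding Ak using c0 by (intro psd_smult) (auto intro: ketbra_psd)
  qed
  have P5: "\<epsilon> / (1 + \<epsilon>) \<le> \<epsilon>" using eps by (auto simp: field_simps)
  have P6: "log 2 (real K) \<le> log 2 (real D) + 2 * log 2 (10 / \<epsilon>) + log 2 (log 2 (20 * real D / \<epsilon>))"
  proof -
    define L where "L = log 2 (20 * real D / \<epsilon>)"
    have L0: "(10/\<epsilon>)^2 * real D > 0" using eps Dp by simp
    have "0 < (10/\<epsilon>)^2 * real D * L" using Kbound Kp unfolding L_def by linarith
    then have Lp: "0 < L" using L0 by (simp add: zero_less_mult_iff)
    have "log 2 (real K) \<le> log 2 ((10/\<epsilon>)^2 * real D * L)"
      using Kbound Kp L0 Lp unfolding L_def by (subst log_le_cancel_iff) auto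
    also have "\<dots> = log 2 ((10/\<epsilon>)^2) + log 2 (real D) + log 2 L"
      using L0 Lp eps Dp by (simp add: log_mult)
    also have "log 2 ((10/\<epsilon>)^2) = 2 * log 2 (10/\<epsilon>)"
      using eps by (simp add: log_nat_power)
    finally show ?thesis unfolding L_def by simp
  qed
  have Aij: "povm_k D K \<epsilon> U \<psi> k $$ (i,j) = complex_of_real c * X k $$ (i,j)"
    if "k \<in> {1..K}" "i < D" "j < D" for k i j
    unfolding Ak using Xc[OF that(1)] that(2,3) by simp
  have P2: "psd D (povm_fail D K \<epsilon> U \<psi>)"
  proof -
    have stB: "is_state D B" unfolding is_state_def using trB ketbra_psd[OF cpsi] unfolding B_def by simp
    define Y where "Y = complex_of_real ((1 + \<epsilon>) / real D) \<cdot>\<^sub>m 1\<^sub>m D - twirl D K U B"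
    have pY: "psd D Y" using twirl stB unfolding loewner_le_def Y_def by blast
    have h1: "complex_of_real (real D / (1 + \<epsilon>)) * complex_of_real ((1 + \<epsilon>) / real D) = 1"
    proof -
      have ne: "1 + \<epsilon> \<noteq> 0" "real D \<noteq> 0" using Dp eps by auto
      have "real D / (1 + \<epsilon>) * ((1 + \<epsilon>) / real D) = 1" using ne by simp
      then show ?thesis by (metis of_real_1 of_real_mult)
    qed
    have h2: "complex_of_real (real D / (1 + \<epsilon>)) * complex_of_real (1 / real K) = complex_of_real c"
    proof -
      have "real D / (1 + \<epsilon>) * (1 / real K) = c" unfolding c_def using Kp eps by (simp add: field_simps)
      then show ?thesis by (metis of_real_mult)
    qed
    have "povm_fail D K \<epsilon> U \<psi> = complex_of_real (real D / (1 + \<epsilon>)) \<cdot>\<^sub>m Y"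
    proof (rule eq_matI)
      fix i j assume "i < dim_row (complex_of_real (real D / (1 + \<epsilon>)) \<cdot>\<^sub>m Y)"
        "j < dim_col (complex_of_real (real D / (1 + \<epsilon>)) \<cdot>\<^sub>m Y)"
      then have i: "i < D" and j: "j < D" unfolding Y_def twirl_def by auto
      define S where "S = (\<Sum>k\<in>{1..K}. X k $$ (i,j))"
      have "povm_fail D K \<epsilon> U \<psi> $$ (i,j) = 1\<^sub>m D $$ (i,j) - (\<Sum>k\<in>{1..K}. povm_k D K \<epsilon> U \<psi> k $$ (i,j))"
        unfolding povm_fail_def using i j by simp
      also have "(\<Sum>k\<in>{1..K}. povm_k D K \<epsilon> U \<psi> k $$ (i,j)) = complex_of_real c * S"
        unfolding S_def sum_distrib_left using Aij i j by (intro sum.cong) auto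
      also have "complex_of_real c = complex_of_real (real D / (1 + \<epsilon>)) * complex_of_real (1 / real K)"
        using h2 by simp
      also have "1\<^sub>m D $$ (i,j) = (complex_of_real (real D / (1 + \<epsilon>)) * complex_of_real ((1 + \<epsilon>) / real D)) * 1\<^sub>m D $$ (i,j)"
        by (simp only: h1 mult_1)
      also have "(complex_of_real (real D / (1 + \<epsilon>)) * complex_of_real ((1 + \<epsilon>) / real D)) * 1\<^sub>m D $$ (i,j)
          - complex_of_real (real D / (1 + \<epsilon>)) * complex_of_real (1 / real K) * S
          = complex_of_real (real D / (1 + \<epsilon>)) * (complex_of_real ((1 + \<epsilon>) / real D) * 1\<^sub>m D $$ (i,j)
             - complex_of_real (1 / real K) * S)"
        by (simp only: right_diff_distrib mult.assoc)
      also have "\<dots> = (complex_of_real (real D / (1 + \<epsilon>)) \<cdot>\<^sub>m Y) $$ (i,j)"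
        unfolding Y_def twirl_def S_def X_def using i j by simp
      finally show "povm_fail D K \<epsilon> U \<psi> $$ (i,j) = (complex_of_real (real D / (1 + \<epsilon>)) \<cdot>\<^sub>m Y) $$ (i,j)" .
    qed (auto simp: povm_fail_def Y_def twirl_def)
    moreover have "psd D (complex_of_real (real D / (1 + \<epsilon>)) \<cdot>\<^sub>m Y)"
      using Dp eps by (intro psd_smult[OF pY]) simp
    ultimately show ?thesis by (simp only:)
  qed
  have P3: "\<forall>k\<in>{1..K}.
         transpose_mat (U k) * receiver_post D (povm_k D K \<epsilon> U \<psi> k) * conj_mat (U k)
         = mtrace (receiver_post D (povm_k D K \<epsilon> U \<psi> k)) \<cdot>\<^sub>m ketbra D \<psi>"
  proof
    fix k assume k: "k \<in> {1..K}"
    have u: "unitary D (U k)" using unit k by auto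
    have Ukc: "U k \<in> carrier_mat D D" by (rule Uc[OF k])
    define T where "T = transpose_mat (U k)"
    define C where "C = conj_mat (U k)"
    define Q where "Q = C * ketbra D \<psi> * T"
    define a where "a = complex_of_real (1 / real D) * complex_of_real c"
    have Tc: "T \<in> carrier_mat D D" and Cc: "C \<in> carrier_mat D D" unfolding T_def C_def using Ukc by auto
    have Qc: "Q \<in> carrier_mat D D" unfolding Q_def
      by (rule mult_carrier_mat[OF mult_carrier_mat[OF Cc ketbra_carrier] Tc])
    have UB: "U k * B \<in> carrier_mat D D" by (rule mult_carrier_mat[OF Ukc Bc])
    have tX: "transpose_mat (X k) = Q"
    proof -
      have 1: "transpose_mat (X k) = transpose_mat (adj (U k)) * transpose_mat (U k * B)"
        unfolding X_def by (rule transpose_mult[OF UB adj_carrier[OF Ukc]])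
      have 2: "transpose_mat (U k * B) = transpose_mat B * T"
        unfolding T_def by (rule transpose_mult[OF Ukc Bc])
      have 3: "transpose_mat B = ketbra D \<psi>" unfolding B_def using \<psi> by (rule transpose_ketbra_conj)
      have 4: "transpose_mat (adj (U k)) = C" unfolding C_def by (rule transpose_adj)
      have "transpose_mat (X k) = C * (ketbra D \<psi> * T)" by (simp only: 1 2 3 4)
      also have "\<dots> = Q" unfolding Q_def by (rule assoc_mult_mat[OF Cc ketbra_carrier Tc, symmetric])
      finally show ?thesis .
    qed
    have RP: "receiver_post D (povm_k D K \<epsilon> U \<psi> k) = a \<cdot>\<^sub>m Q"
      using receiver_post_eq[OF Akc[OF k] D] unfolding Ak a_def
      by (simp add: transpose_smult tX smult_smult_m)
    have trRP: "mtrace (receiver_post D (povm_k D K \<epsilon> U \<psi> k)) = a"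
      using receiver_post_eq[OF Akc[OF k] D] mtrace_smult[OF transpose_carrier_mat[THEN iffD2, OF Akc[OF k]]]
        mtrace_transpose[OF Akc[OF k]] trAk[OF k] unfolding a_def by simp
    have E0: "T * (a \<cdot>\<^sub>m Q) * C = a \<cdot>\<^sub>m (T * Q * C)"
      using Tc Qc Cc by (simp add: mult_smult_distrib[OF Tc Qc] mult_smult_assoc_mat[of _ D D])
    also have "T * Q * C = ketbra D \<psi>" unfolding T_def Q_def C_def
      by (rule conj_step[OF u ketbra_carrier])
    finally have E: "T * (a \<cdot>\<^sub>m Q) * C = a \<cdot>\<^sub>m ketbra D \<psi>" .
    show "transpose_mat (U k) * receiver_post D (povm_k D K \<epsilon> U \<psi> k) * conj_mat (U k)
         = mtrace (receiver_post D (povm_k D K \<epsilon> U \<psi> k)) \<cdot>\<^sub>m ketbra D \<psi>"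
      by (subst trRP, subst RP, fold T_def C_def, rule E)
  qed
  have P4: "mtrace (receiver_post D (povm_fail D K \<epsilon> U \<psi>)) = complex_of_real (\<epsilon> / (1 + \<epsilon>))"
  proof -
    define F where "F = povm_fail D K \<epsilon> U \<psi>"
    have Fc: "F \<in> carrier_mat D D" unfolding F_def povm_fail_def by simp
    have "mtrace (receiver_post D F) = complex_of_real (1 / real D) * mtrace F"
      using receiver_post_eq[OF Fc D] mtrace_smult[OF transpose_carrier_mat[THEN iffD2, OF Fc]]
        mtrace_transpose[OF Fc] by simp
    also have "mtrace F = (\<Sum>i<D. (1 - (\<Sum>k\<in>{1..K}. povm_k D K \<epsilon> U \<psi> k $$ (i,i))))"
      unfolding F_def povm_fail_def mtrace_def by simp
    also have "\<dots> = of_nat D - (\<Sum>i<D. \<Sum>k\<in>{1..K}. povm_k D K \<epsilon> U \<psi> k $$ (i,i))"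
      by (simp add: sum_subtractf)
    also have "(\<Sum>i<D. \<Sum>k\<in>{1..K}. povm_k D K \<epsilon> U \<psi> k $$ (i,i))
        = (\<Sum>k\<in>{1..K}. mtrace (povm_k D K \<epsilon> U \<psi> k))"
    proof -
      have Akd: "dim_row (povm_k D K \<epsilon> U \<psi> k) = D" if "k \<in> {1..K}" for k using Akc[OF that] by simp
      show ?thesis by (subst sum.swap) (auto simp: mtrace_def Akd intro!: sum.cong)
    qed
    also have "\<dots> = (\<Sum>k\<in>{1..K}. complex_of_real c)" using trAk by (intro sum.cong) auto
    also have "\<dots> = of_nat K * complex_of_real c" by simp
    also have "complex_of_real (1 / real D) * (of_nat D - of_nat K * complex_of_real c)
        = complex_of_real (1 / real D * (real D - real K * c))" by simp
    also have "1 / real D * (real D - real K * c) = \<epsilon> / (1 + \<epsilon>)"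
    proof -
      have kc: "real K * c = real D / (1 + \<epsilon>)" unfolding c_def using Kp by simp
      have e1: "1 + \<epsilon> > 0" using eps by simp
      have "1 / real D * (real D - real D / (1 + \<epsilon>)) = 1 - 1 / (1 + \<epsilon>)"
        using Dp by (simp add: right_diff_distrib)
      also have "\<dots> = \<epsilon> / (1 + \<epsilon>)" using e1 by (simp add: field_simps)
      finally show ?thesis unfolding kc .
    qed
    finally show ?thesis unfolding F_def .
  qed
  show "(\<forall>k\<in>{1..K}. psd D (povm_k D K \<epsilon> U \<psi> k)) \<and>
      psd D (povm_fail D K \<epsilon> U \<psi>) \<and>
      (\<forall>k\<in>{1..K}.
         transpose_mat (U k) * receiver_post D (povm_k D K \<epsilon> U \<psi> k) * conj_mat (U k)
         = mtrace (receiver_post D (povm_k D K \<epsilon> U \<psi> k)) \<cdot>\<^sub>m ketbra D \<psi>) \<and>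
      mtrace (receiver_post D (povm_fail D K \<epsilon> U \<psi>)) = complex_of_real (\<epsilon> / (1 + \<epsilon>)) \<and>
      \<epsilon> / (1 + \<epsilon>) \<le> \<epsilon> \<and>
      log 2 (real K) \<le> log 2 (real D) + 2 * log 2 (10 / \<epsilon>) + log 2 (log 2 (20 * real D / \<epsilon>))"
    using P1 P2 P3 P4 P5 P6 by blast
qed

end
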